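(* Let $\eta\ge 0$ and $\delta>0$ with $\delta<\sqrt{\eta^2+1/12}$. Then there exists a constant $\gamma=\gamma(\delta,\eta)<1$, depending only on $\delta$ and $\eta$, such that for every $d\in\mathbb{N}$ and every $x\in\mathbb{R}^d$ with $|x_i-1/2|=\eta$ for all $i=1,\dots,d$, \[ \lambda_d\bigl(B_\delta^d(x)\cap[0,1]^d\bigr)\le \gamma^d . \]
   Context: $B_\delta^d(x)=\{y\in\mathbb{R}^d \mid \|y-x\|_2\le \delta\sqrt{d}\}$ is the Euclidean ball of radius $\delta\sqrt d$ centered at $x$; $\lambda_d$ is $d$-dimensional Lebesgue measure. *)

theory Defs
  imports "HOL-Probability.Probability"
begin

text \<open>Vectors of R^d are represented as functions nat => real, extensional on {..<d}.
  Lebesgue measure lambda_d is the product measure of lborel over the index set {..<d}.\<close>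

definition lebesgue_d :: "nat \<Rightarrow> (nat \<Rightarrow> real) measure" where
  "lebesgue_d d = Pi\<^sub>M {..<d} (\<lambda>_. lborel)"

definition euclid_norm_d :: "nat \<Rightarrow> (nat \<Rightarrow> real) \<Rightarrow> real" where
  "euclid_norm_d d y = sqrt (\<Sum>i<d. (y i)\<^sup>2)"

definition ball_d :: "nat \<Rightarrow> real \<Rightarrow> (nat \<Rightarrow> real) \<Rightarrow> (nat \<Rightarrow> real) set" where
  "ball_d d \<delta> x = {y \<in> PiE {..<d} (\<lambda>_. UNIV).
      euclid_norm_d d (\<lambda>i. y i - x i) \<le> \<delta> * sqrt (real d)}"

definition cube_d :: "nat \<Rightarrow> (nat \<Rightarrow> real) set" where
  "cube_d d = PiE {..<d} (\<lambda>_. {0..1})"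

end

theory Submission
  imports Defs
begin

lemma exp_neg_le_quad:
  fixes s :: real assumes "0 \<le> s"
  shows "exp (- s) \<le> 1 - s + s\<^sup>2 / 2"
proof -
  obtain u where "exp (- s) = (\<Sum>m<3. ((- s) ^ m) / fact m) + (exp u / fact 3) * (- s) ^ 3"
    using Maclaurin_exp_le[of "-s" 3] by blast
  moreover have "(\<Sum>m<3. ((- s) ^ m) / fact m) = 1 - s + s\<^sup>2 / 2"
    by (simp add: numeral_3_eq_3 power2_eq_square)
  moreover have "(exp u / fact 3) * (- s) ^ 3 \<le> 0"
    using assms by (simp add: mult_nonneg_nonpos)
  ultimately show ?thesis by linarith
qed

lemma one_dim:
  fixes a t K :: real
  assumes t: "0 \<le> t" and K: "\<And>z. z \<in> {0..1} \<Longrightarrow> (z - a)\<^sup>2 \<le> K"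
  shows "(\<integral>\<^sup>+ z. ennreal (exp (- t * (z - a)\<^sup>2)) * indicator {0..1} z \<partial>lborel)
         \<le> ennreal (1 - (t - t\<^sup>2 * K / 2) * (1/3 - a + a\<^sup>2))"
proof -
  define c where "c = t - t\<^sup>2 * K / 2"
  have pw: "exp (- t * (z - a)\<^sup>2) \<le> 1 - c * (z - a)\<^sup>2" if z: "z \<in> {0..1}" for z
  proof -
    define w where "w = (z - a)\<^sup>2"
    have w0: "0 \<le> w" unfolding w_def by simp
    have wK: "w \<le> K" using K[OF z] unfolding w_def .
    have "exp (- t * w) \<le> 1 - t * w + (t * w)\<^sup>2 / 2"
      using exp_neg_le_quad[of "t * w"] t w0 by simp
    also have "(t * w)\<^sup>2 = t\<^sup>2 * (w * w)" by (simp add: power2_eq_square)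
    also have "t\<^sup>2 * (w * w) \<le> t\<^sup>2 * (K * w)"
      using wK w0 by (intro mult_left_mono mult_right_mono) auto
    finally have "exp (- t * w) \<le> 1 - c * w" unfolding c_def by (simp add: algebra_simps)
    then show ?thesis unfolding w_def by simp
  qed
  have "(\<integral>\<^sup>+ z. ennreal (exp (- t * (z - a)\<^sup>2)) * indicator {0..1} z \<partial>lborel)
      \<le> (\<integral>\<^sup>+ z. ennreal (1 - c * (z - a)\<^sup>2) * indicator {0..1} z \<partial>lborel)"
    using pw by (intro nn_integral_mono) (auto split: split_indicator intro!: ennreal_leI)
  also have "\<dots> = ennreal ((\<lambda>z. z - c * (z - a) ^ 3 / 3) 1 - (\<lambda>z. z - c * (z - a) ^ 3 / 3) 0)"
  proof (rule nn_integral_FTC_Icc)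
    show "(\<lambda>z. 1 - c * (z - a)\<^sup>2) \<in> borel_measurable borel" by measurable
    show "((\<lambda>z. z - c * (z - a) ^ 3 / 3) has_real_derivative 1 - c * (x - a)\<^sup>2) (at x)" for x
      by (auto intro!: derivative_eq_intros simp: power2_eq_square numeral_3_eq_3 field_simps)
    show "0 \<le> 1 - c * (x - a)\<^sup>2" if "x \<in> {0..1}" for x
      using pw[OF that] exp_gt_zero[of "- t * (x - a)\<^sup>2"] by linarith
  qed simp
  also have "(\<lambda>z. z - c * (z - a) ^ 3 / 3) 1 - (\<lambda>z. z - c * (z - a) ^ 3 / 3) 0
      = 1 - c * (1/3 - a + a\<^sup>2)"
    by (simp add: field_simps power3_eq_cube power2_eq_square)
  finally show ?thesis unfolding c_def .
qed

theorem lemma2p2: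
  fixes \<eta> \<delta> :: real
  assumes "\<eta> \<ge> 0" and "\<delta> > 0" and "\<delta> < sqrt (\<eta>\<^sup>2 + 1/12)"
  shows "\<exists>\<gamma>::real. \<gamma> < 1 \<and>
    (\<forall>d::nat. \<forall>x::nat \<Rightarrow> real.
       (\<forall>i<d. \<bar>x i - 1/2\<bar> = \<eta>) \<longrightarrow>
       emeasure (lebesgue_d d) (ball_d d \<delta> x \<inter> cube_d d) \<le> ennreal (\<gamma> ^ d))"
proof -
  define m where "m = \<eta>\<^sup>2 + 1/12"
  define K where "K = (1/2 + \<eta>)\<^sup>2"
  define t where "t = (m - \<delta>\<^sup>2) / (K * m)"
  define c where "c = t - t\<^sup>2 * K / 2"
  define \<gamma> where "\<gamma> = exp (t * \<delta>\<^sup>2) * (1 - c * m)"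
  have m0: "0 < m" unfolding m_def by (simp add: add_nonneg_pos)
  have dm: "\<delta>\<^sup>2 < m"
  proof -
    have "\<delta>\<^sup>2 < (sqrt m)\<^sup>2"
      using assms(2,3) unfolding m_def by (intro power_strict_mono) auto
    then show ?thesis using m0 by simp
  qed
  have K0: "0 < K" unfolding K_def using assms(1) by simp
  have mK: "m \<le> K" unfolding m_def K_def using assms(1) by (simp add: power2_eq_square algebra_simps)
  have t0: "0 < t" unfolding t_def using dm m0 K0 by simp
  have tKm: "t * K * m = m - \<delta>\<^sup>2" unfolding t_def using m0 K0 by simp
  have cm: "c * m = t * (m + \<delta>\<^sup>2) / 2"
  proof -
    have "c * m = t * m - t * (t * K * m) / 2" unfolding c_def by (simp add: power2_eq_square algebra_simps)
    then show ?thesis unfolding tKm by (simp add: field_simps)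
  qed
  have Kt1: "K * t \<le> 1"
  proof -
    have "K * t * m \<le> 1 * m" using tKm zero_le_power2[of \<delta>] by (simp add: mult.commute mult.left_commute)
    then show ?thesis using m0 by simp
  qed
  have cle: "2 * K * c \<le> 1"
  proof -
    have "2 * K * c = 1 - (1 - K * t)\<^sup>2" unfolding c_def by (simp add: power2_eq_square algebra_simps)
    then show ?thesis by simp
  qed
  have cm1: "c * m \<le> 1"
  proof -
    have "2 * K * (c * m) \<le> 1 * m" using cle m0 by (simp add: mult.assoc[symmetric]  mult_right_mono)
    also have "\<dots> \<le> 2 * K * 1" using mK K0 by simp
    finally show ?thesis using K0 by simp
  qed
  have g0: "0 \<le> \<gamma>" unfolding \<gamma>_def using cm1 by simp
  have g1: "\<gamma> < 1"
  proof -
    have "t * \<delta>\<^sup>2 < t * m" using t0 dm by simp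
    then have "1 - c * m < 1 - t * \<delta>\<^sup>2" using cm by (simp add: field_simps)
    also have "\<dots> \<le> exp (- (t * \<delta>\<^sup>2))" using exp_ge_add_one_self[of "- (t * \<delta>\<^sup>2)"] by simp
    finally have "exp (t * \<delta>\<^sup>2) * (1 - c * m) < exp (t * \<delta>\<^sup>2) * exp (- (t * \<delta>\<^sup>2))"
      by simp
    then show ?thesis unfolding \<gamma>_def by (simp add: exp_minus_inverse)
  qed
  interpret P: product_sigma_finite "\<lambda>_::nat. lborel"
    by (simp add: product_sigma_finite_def lborel.sigma_finite_measure_axioms)
  have main: "emeasure (lebesgue_d d) (ball_d d \<delta> x \<inter> cube_d d) \<le> ennreal (\<gamma> ^ d)"
    if hx: "\<forall>i<d. \<bar>x i - 1/2\<bar> = \<eta>" for d x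
  proof -
    define A where "A = ball_d d \<delta> x \<inter> cube_d d"
    define M where "M = lebesgue_d d"
    define f where "f i z = ennreal (exp (t * \<delta>\<^sup>2)) * (ennreal (exp (- t * (z - x i)\<^sup>2)) * indicator {0..1} z)" for i z
    have fm: "f i \<in> borel_measurable lborel" for i unfolding f_def by measurable
    have onef: "(\<integral>\<^sup>+ z. f i z \<partial>lborel) \<le> ennreal \<gamma>" if i: "i < d" for i
    proof -
      have Kz: "(z - x i)\<^sup>2 \<le> K" if "z \<in> {0..1}" for z
      proof -
        have "\<bar>z - x i\<bar> \<le> 1/2 + \<eta>" using hx i that by (auto simp: abs_if split: if_splits)
        then have "\<bar>z - x i\<bar>\<^sup>2 \<le> (1/2 + \<eta>)\<^sup>2" by (intro power_mono) auto
        then show ?thesis unfolding K_def by simp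
      qed
      have mi: "1/3 - x i + (x i)\<^sup>2 = m"
      proof -
        have "(x i - 1/2)\<^sup>2 = \<eta>\<^sup>2" using hx i by (metis power2_abs)
        then show ?thesis unfolding m_def by (simp add: power2_eq_square algebra_simps)
      qed
      have "(\<integral>\<^sup>+ z. f i z \<partial>lborel) = ennreal (exp (t * \<delta>\<^sup>2)) *
          (\<integral>\<^sup>+ z. ennreal (exp (- t * (z - x i)\<^sup>2)) * indicator {0..1} z \<partial>lborel)"
        unfolding f_def by (rule nn_integral_cmult) measurable
      also have "\<dots> \<le> ennreal (exp (t * \<delta>\<^sup>2)) * ennreal (1 - c * m)"
        using one_dim[of t "x i" K, OF _ Kz] t0 mi unfolding c_def
        by (intro mult_left_mono) auto
      also have "\<dots> = ennreal \<gamma>" unfolding \<gamma>_def by (rule ennreal_mult[symmetric]) (auto simp: cm1)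
      finally show ?thesis .
    qed
    show ?thesis
    proof (cases "A \<in> sets M")
      case False
      then show ?thesis unfolding A_def M_def by (simp add: emeasure_notin_sets)
    next
      case True
      have "emeasure M A = (\<integral>\<^sup>+ y. indicator A y \<partial>M)" using True by simp
      also have "\<dots> \<le> (\<integral>\<^sup>+ y. (\<Prod>i\<in>{..<d}. f i (y i)) \<partial>M)"
      proof (intro nn_integral_mono)
        fix y assume "y \<in> space M"
        show "indicator A y \<le> (\<Prod>i\<in>{..<d}. f i (y i))"
        proof (cases "y \<in> A")
          case False then show ?thesis by simp
        next
          case yA: True
          have cube: "y i \<in> {0..1}" if "i < d" for i
          proof -
            have "y \<in> cube_d d" using yA unfolding A_def by simp
            then show ?thesis unfolding cube_d_def using that by (simp add: PiE_iff)
          qed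
          have "sqrt (\<Sum>i<d. (y i - x i)\<^sup>2) \<le> \<delta> * sqrt (real d)"
          proof -
            have "y \<in> ball_d d \<delta> x" using yA unfolding A_def by simp
            then have "euclid_norm_d d (\<lambda>i. y i - x i) \<le> \<delta> * sqrt (real d)"
              unfolding ball_d_def by simp
            then show ?thesis unfolding euclid_norm_d_def .
          qed
          also have "\<delta> * sqrt (real d) = sqrt (\<delta>\<^sup>2 * real d)"
            using assms(2) by (simp add: real_sqrt_mult)
          finally have S: "(\<Sum>i<d. (y i - x i)\<^sup>2) \<le> \<delta>\<^sup>2 * real d" by simp
          have "(\<Prod>i\<in>{..<d}. f i (y i)) = (\<Prod>i\<in>{..<d}. ennreal (exp (t * \<delta>\<^sup>2 - t * (y i - x i)\<^sup>2)))"
          proof (rule prod.cong[OF refl])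
            fix i assume "i \<in> {..<d}"
            then have "y i \<in> {0..1}" using cube by simp
            then have "f i (y i) = ennreal (exp (t * \<delta>\<^sup>2)) * ennreal (exp (- t * (y i - x i)\<^sup>2))"
              unfolding f_def by simp
            also have "\<dots> = ennreal (exp (t * \<delta>\<^sup>2) * exp (- t * (y i - x i)\<^sup>2))"
              by (rule ennreal_mult[symmetric]) auto
            also have "exp (t * \<delta>\<^sup>2) * exp (- t * (y i - x i)\<^sup>2) = exp (t * \<delta>\<^sup>2 - t * (y i - x i)\<^sup>2)"
              by (simp add: exp_add[symmetric])
            finally show "f i (y i) = ennreal (exp (t * \<delta>\<^sup>2 - t * (y i - x i)\<^sup>2))" .
          qed
          also have "\<dots> = ennreal (\<Prod>i\<in>{..<d}. exp (t * \<delta>\<^sup>2 - t * (y i - x i)\<^sup>2))"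
            by (simp add: prod_ennreal)
          also have "(\<Prod>i\<in>{..<d}. exp (t * \<delta>\<^sup>2 - t * (y i - x i)\<^sup>2))
              = exp (\<Sum>i\<in>{..<d}. (t * \<delta>\<^sup>2 - t * (y i - x i)\<^sup>2))"
            by (simp add: exp_sum)
          also have "(\<Sum>i\<in>{..<d}. (t * \<delta>\<^sup>2 - t * (y i - x i)\<^sup>2))
              = t * (\<delta>\<^sup>2 * real d - (\<Sum>i<d. (y i - x i)\<^sup>2))"
            by (simp add: sum_subtractf sum_distrib_left[symmetric] algebra_simps)
          finally have eq: "(\<Prod>i\<in>{..<d}. f i (y i)) = ennreal (exp (t * (\<delta>\<^sup>2 * real d - (\<Sum>i<d. (y i - x i)\<^sup>2))))" .
          have "0 \<le> t * (\<delta>\<^sup>2 * real d - (\<Sum>i<d. (y i - x i)\<^sup>2))" using S t0 by simp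
          then have "1 \<le> exp (t * (\<delta>\<^sup>2 * real d - (\<Sum>i<d. (y i - x i)\<^sup>2)))" by simp
          then show ?thesis using yA eq by (simp add: ennreal_leI)
        qed
      qed
      also have "\<dots> = (\<Prod>i\<in>{..<d}. \<integral>\<^sup>+ z. f i z \<partial>lborel)"
        unfolding M_def lebesgue_d_def using fm by (intro P.product_nn_integral_prod) auto
      also have "\<dots> \<le> (\<Prod>i\<in>{..<d}. ennreal \<gamma>)"
        using onef by (intro prod_mono_ennreal) auto
      also have "\<dots> = ennreal (\<gamma> ^ d)" using g0 by (simp add: ennreal_power)
      finally show ?thesis unfolding A_def M_def .
    qed
  qed
  show ?thesis using g1 main by blast
qed

end
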